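(* Let $G$ be a bipartite graph that is not planar. Then there are no finite point sets $P,W$ in the plane with $P\cup W$ in general position such that $\mathrm{DG}^-(P,W)$ is isomorphic to $G$.
   Context: Let $P$ (the vertices) and $W$ (the witnesses) be finite point sets in $\mathbb{R}^2$; $P$ and $W$ may share points. The witness Delaunay graph $\mathrm{DG}^-(P,W)$ is the graph with vertex set $P$ in which distinct $x,y\in P$ are adjacent if and only if there is an open disk containing no point of $W$ whose bounding circle passes through $x$ and $y$. General position of $P\cup W$ means that no three distinct points of $P\cup W$ are collinear and no four distinct points of $P\cup W$ are concyclic. *)

theory Defs
  imports "HOL-Analysis.Analysis"
begin

type_synonym point = "real^2"

definition simple_graph :: "'a set \<Rightarrow> ('a \<Rightarrow> 'a \<Rightarrow> bool) \<Rightarrow> bool" where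
  "simple_graph V E \<longleftrightarrow>
     (\<forall>u v. E u v \<longrightarrow> u \<in> V \<and> v \<in> V \<and> u \<noteq> v \<and> E v u)"

definition bipartite :: "'a set \<Rightarrow> ('a \<Rightarrow> 'a \<Rightarrow> bool) \<Rightarrow> bool" where
  "bipartite V E \<longleftrightarrow> (\<exists>A B. A \<union> B = V \<and> A \<inter> B = {} \<and>
     (\<forall>u v. E u v \<longrightarrow> (u \<in> A \<and> v \<in> B) \<or> (u \<in> B \<and> v \<in> A)))"

definition graph_edges :: "'a set \<Rightarrow> ('a \<Rightarrow> 'a \<Rightarrow> bool) \<Rightarrow> 'a set set" where
  "graph_edges V E = {{u, v} | u v. u \<in> V \<and> v \<in> V \<and> E u v}"

definition planar :: "'a set \<Rightarrow> ('a \<Rightarrow> 'a \<Rightarrow> bool) \<Rightarrow> bool" where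
  "planar V E \<longleftrightarrow> (\<exists>(pos :: 'a \<Rightarrow> point) (\<gamma> :: 'a set \<Rightarrow> real \<Rightarrow> point).
     inj_on pos V \<and>
     (\<forall>u v. E u v \<longrightarrow>
        arc (\<gamma> {u, v}) \<and>
        {pathstart (\<gamma> {u, v}), pathfinish (\<gamma> {u, v})} = {pos u, pos v} \<and>
        path_image (\<gamma> {u, v}) \<inter> pos ` V = {pos u, pos v}) \<and>
     (\<forall>e\<in>graph_edges V E. \<forall>e'\<in>graph_edges V E. e \<noteq> e' \<longrightarrow>
        path_image (\<gamma> e) \<inter> path_image (\<gamma> e') = pos ` (e \<inter> e')))"

definition concyclic :: "point set \<Rightarrow> bool" where
  "concyclic S \<longleftrightarrow> (\<exists>c r. \<forall>p\<in>S. dist c p = r)"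

definition general_position :: "point set \<Rightarrow> bool" where
  "general_position S \<longleftrightarrow>
     (\<forall>T\<subseteq>S. card T = 3 \<longrightarrow> \<not> collinear T) \<and>
     (\<forall>T\<subseteq>S. card T = 4 \<longrightarrow> \<not> concyclic T)"

text \<open>Adjacency in the witness Delaunay graph DG^-(P,W) (for x, y in P).\<close>
definition wdg_adj :: "point set \<Rightarrow> point \<Rightarrow> point \<Rightarrow> bool" where
  "wdg_adj W x y \<longleftrightarrow> x \<noteq> y \<and>
     (\<exists>c r. dist c x = r \<and> dist c y = r \<and> ball c r \<inter> W = {})"

definition iso_to_wdg :: "'a set \<Rightarrow> ('a \<Rightarrow> 'a \<Rightarrow> bool) \<Rightarrow> point set \<Rightarrow> point set \<Rightarrow> bool" where
  "iso_to_wdg V E P W \<longleftrightarrow> (\<exists>f. bij_betw f V P \<and>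
     (\<forall>u\<in>V. \<forall>v\<in>V. E u v \<longleftrightarrow> wdg_adj W (f u) (f v)))"

end

theory Submission imports Defs begin

lemma L1:
  fixes W :: "point set" and m a c :: point
  assumes h1: "dist m a = r" and h2: "ball m r \<inter> W = {}" and h3: "c \<noteq> a" and h4: "dist m c \<le> r"
  shows "wdg_adj W a c"
proof -
  define q where "q = inner (c-a) (m-a)"
  define n where "n = inner (c-a) (c-a)"
  have npos: "n > 0" using h3 unfolding n_def by simp
  have r0: "r \<ge> 0" using h1 by auto
  have ma: "inner (m-a) (m-a) = r^2" using h1 by (metis dist_norm power2_norm_eq_inner)
  have "inner (c-m) (c-m) \<le> r^2" using h4 r0
    by (metis dist_commute dist_norm power2_norm_eq_inner power_mono zero_le_dist)
  moreover have "c - m = (c-a) - (m-a)" by simp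
  hence "inner (c-m) (c-m) = n - 2*q + inner (m-a) (m-a)"
    unfolding n_def q_def by (simp add: inner_diff_left inner_diff_right inner_commute)
  ultimately have qn: "2*q \<ge> n" using ma by simp
  hence qpos: "q > 0" using npos by simp
  define t where "t = n / (2*q)"
  have t0: "t > 0" using npos qpos unfolding t_def by simp
  have t1: "t \<le> 1" using qn qpos unfolding t_def by simp
  have tq: "2*t*q = n" unfolding t_def using qpos by simp
  define m' where "m' = a + t *\<^sub>R (m - a)"
  have d1: "dist m' a = t*r" unfolding m'_def using h1 t0 by (simp add: dist_norm norm_minus_commute)
  have "inner (m' - c) (m' - c) = (t*r)^2"
  proof -
    have e: "m' - c = t *\<^sub>R (m-a) - (c-a)" unfolding m'_def by (simp add: algebra_simps)
    have gen: "inner (t *\<^sub>R X - Y) (t *\<^sub>R X - Y) = t^2 * inner X X - 2*t*inner Y X + inner Y Y" for X Y :: point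
      by (simp add: inner_diff_left inner_diff_right inner_commute power2_eq_square algebra_simps)
    have "inner (m' - c) (m' - c) = t^2 * inner (m-a) (m-a) - 2*t*q + n"
      unfolding e n_def q_def by (rule gen)
    thus ?thesis using tq ma by (simp add: power_mult_distrib)
  qed
  hence d2: "dist m' c = t*r" using t0 r0
    by (metis dist_norm norm_eq_sqrt_inner real_sqrt_abs abs_of_nonneg mult_nonneg_nonneg less_imp_le)
  have dmm: "dist m m' = (1-t)*r"
  proof -
    have "m - m' = (1-t) *\<^sub>R (m-a)" unfolding m'_def by (simp add: algebra_simps)
    thus ?thesis using h1 t1 by (simp add: dist_norm norm_minus_commute)
  qed
  have "ball m' (t*r) \<subseteq> ball m r"
  proof
    fix x assume "x \<in> ball m' (t*r)"
    hence "dist m' x < t*r" by simp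
    hence "dist m x < r" using dist_triangle[of m x m'] dmm by (simp add: algebra_simps)
    thus "x \<in> ball m r" by simp
  qed
  hence "ball m' (t*r) \<inter> W = {}" using h2 by blast
  thus ?thesis unfolding wdg_adj_def using d1 d2 h3 by (metis dist_commute)
qed

lemma sqd: "inner (x - m) (x - m) = (dist m x)^2" for x m :: point
  by (metis dist_commute dist_norm power2_norm_eq_inner)

lemma L2:
  fixes m1 m2 a b c d p :: point
  assumes "dist m1 a = r1" "dist m1 b = r1" "dist m2 c = r2" "dist m2 d = r2"
    and "p \<in> closed_segment a b" "p \<in> closed_segment c d"
  shows "dist m1 c \<le> r1 \<or> dist m1 d \<le> r1 \<or> dist m2 a \<le> r2 \<or> dist m2 b \<le> r2"
proof (rule ccontr)
  assume H: "\<not> ?thesis"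
  define K where "K = inner m1 m1 - inner m2 m2 - r1^2 + r2^2"
  define g where "g x = 2 * inner x (m2 - m1) + K" for x :: point
  have gx: "g x = (dist m1 x)^2 - r1^2 - ((dist m2 x)^2 - r2^2)" for x
    unfolding g_def K_def sqd[symmetric]
    by (simp add: inner_diff_left inner_diff_right inner_commute algebra_simps)
  have gc: "g ((1-u) *\<^sub>R x + u *\<^sub>R y) = (1-u) * g x + u * g y" for u x y
    unfolding g_def by (simp add: inner_add_left algebra_simps)
  have r1: "r1 \<ge> 0" "r2 \<ge> 0" using assms by auto
  have lt: "r < dist m x \<Longrightarrow> 0 \<le> r \<Longrightarrow> r^2 < (dist m x)^2" for r m x
    by (simp add: power_strict_mono)
  have "g a < 0" "g b < 0" "g c > 0" "g d > 0"
    using H r1 lt[of r2 m2 a] lt[of r2 m2 b] lt[of r1 m1 c] lt[of r1 m1 d] assms(1-4) by (auto simp: gx)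
  obtain u where u: "0 \<le> u" "u \<le> 1" "p = (1-u) *\<^sub>R a + u *\<^sub>R b"
    using assms(5) unfolding closed_segment_def by auto
  obtain v where v: "0 \<le> v" "v \<le> 1" "p = (1-v) *\<^sub>R c + v *\<^sub>R d"
    using assms(6) unfolding closed_segment_def by auto
  have "g p < 0" unfolding u(3) gc
    using convex_bound_lt[of "g a" 0 "g b" "1-u" u] u \<open>g a < 0\<close> \<open>g b < 0\<close> by simp
  moreover have "g p > 0" unfolding v(3) gc
    using convex_bound_lt[of "-g c" 0 "-g d" "1-v" v] v \<open>g c > 0\<close> \<open>g d > 0\<close> by simp
  ultimately show False by simp
qed

lemma wdg_sym: "wdg_adj W x y \<longleftrightarrow> wdg_adj W y x"
  unfolding wdg_adj_def by blast

lemma L3: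
  assumes "wdg_adj W a b" "z \<in> closed_segment a b" "z \<noteq> a" "z \<noteq> b"
  shows "wdg_adj W a z \<and> wdg_adj W b z"
proof -
  obtain m r where h: "dist m a = r" "dist m b = r" "ball m r \<inter> W = {}"
    using assms(1) unfolding wdg_adj_def by blast
  have "closed_segment a b \<subseteq> cball m r"
    by (rule closed_segment_subset) (use h in auto)
  hence "dist m z \<le> r" using assms(2) by auto
  thus ?thesis using L1[OF h(1) h(3)] L1[OF h(2) h(3)] assms(3,4) by auto
qed

lemma L4:
  assumes "wdg_adj W a b" "wdg_adj W c d" "c \<noteq> a" "c \<noteq> b" "d \<noteq> a" "d \<noteq> b"
    "p \<in> closed_segment a b" "p \<in> closed_segment c d"
  shows "(wdg_adj W a c \<and> wdg_adj W b c) \<or> (wdg_adj W a d \<and> wdg_adj W b d) \<or>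
         (wdg_adj W c a \<and> wdg_adj W d a) \<or> (wdg_adj W c b \<and> wdg_adj W d b)"
proof -
  obtain m1 r1 where h1: "dist m1 a = r1" "dist m1 b = r1" "ball m1 r1 \<inter> W = {}"
    using assms(1) unfolding wdg_adj_def by blast
  obtain m2 r2 where h2: "dist m2 c = r2" "dist m2 d = r2" "ball m2 r2 \<inter> W = {}"
    using assms(2) unfolding wdg_adj_def by blast
  from L2[OF h1(1,2) h2(1,2) assms(7,8)] show ?thesis
    using L1[OF h1(1) h1(3)] L1[OF h1(2) h1(3)] L1[OF h2(1) h2(3)] L1[OF h2(2) h2(3)] assms(3-6)
    by (metis wdg_sym)
qed

lemma L5:
  fixes x y z p :: point
  assumes "p \<in> closed_segment x y" "p \<in> closed_segment x z" "p \<noteq> x"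
  shows "y \<in> closed_segment x z \<or> z \<in> closed_segment x y"
proof -
  obtain s where s: "0 \<le> s" "s \<le> 1" "p = (1-s) *\<^sub>R x + s *\<^sub>R y"
    using assms(1) unfolding closed_segment_def by auto
  obtain t where t: "0 \<le> t" "t \<le> 1" "p = (1-t) *\<^sub>R x + t *\<^sub>R z"
    using assms(2) unfolding closed_segment_def by auto
  have s0: "s \<noteq> 0" using s assms(3) by auto
  have t0: "t \<noteq> 0" using t assms(3) by auto
  have eq: "s *\<^sub>R (y - x) = t *\<^sub>R (z - x)" using s(3) t(3) by (simp add: algebra_simps)
  show ?thesis
  proof (cases "t \<le> s")
    case True
    have "y - x = (t/s) *\<^sub>R (z - x)" proof -
      have "y - x = inverse s *\<^sub>R (s *\<^sub>R (y - x))" using s0 by simp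
      also have "\<dots> = (t/s) *\<^sub>R (z - x)" using eq by (simp add: divide_inverse mult.commute)
      finally show ?thesis .
    qed
    hence "y = (1 - t/s) *\<^sub>R x + (t/s) *\<^sub>R z" by (simp add: algebra_simps)
    moreover have "0 \<le> t/s" "t/s \<le> 1" using True s t s0 by auto
    ultimately show ?thesis unfolding closed_segment_def by blast
  next
    case False
    have "z - x = (s/t) *\<^sub>R (y - x)" proof -
      have "z - x = inverse t *\<^sub>R (t *\<^sub>R (z - x))" using t0 by simp
      also have "\<dots> = (s/t) *\<^sub>R (y - x)" using eq[symmetric] by (simp add: divide_inverse mult.commute)
      finally show ?thesis .
    qed
    hence "z = (1 - s/t) *\<^sub>R x + (s/t) *\<^sub>R y" by (simp add: algebra_simps)
    moreover have "0 \<le> s/t" "s/t \<le> 1" using False s t t0 by auto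
    ultimately show ?thesis unfolding closed_segment_def by blast
  qed
qed

theorem mainTheorem7:
  fixes V :: "'a set" and E :: "'a \<Rightarrow> 'a \<Rightarrow> bool"
  assumes "simple_graph V E" and "bipartite V E" and "\<not> planar V E"
  shows "\<not> (\<exists>P W. finite P \<and> finite W \<and> general_position (P \<union> W) \<and> iso_to_wdg V E P W)"
proof
  assume "\<exists>P W. finite P \<and> finite W \<and> general_position (P \<union> W) \<and> iso_to_wdg V E P W"
  then obtain P W where "iso_to_wdg V E P W" by blast
  then obtain f where bij: "bij_betw f V P"
    and iso0: "\<forall>u\<in>V. \<forall>v\<in>V. E u v \<longleftrightarrow> wdg_adj W (f u) (f v)"
    unfolding iso_to_wdg_def by blast
  have iso: "\<And>u v. u \<in> V \<Longrightarrow> v \<in> V \<Longrightarrow> E u v \<longleftrightarrow> wdg_adj W (f u) (f v)"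
    using iso0 by simp
  have sg: "\<And>u v. E u v \<Longrightarrow> u \<in> V \<and> v \<in> V \<and> u \<noteq> v \<and> E v u"
    using assms(1) unfolding simple_graph_def by blast
  have TF: "\<And>u v w. E u v \<Longrightarrow> E v w \<Longrightarrow> E u w \<Longrightarrow> False"
  proof -
    fix u v w assume "E u v" "E v w" "E u w"
    obtain A B where AB: "A \<inter> B = {}"
      "\<forall>u v. E u v \<longrightarrow> (u \<in> A \<and> v \<in> B) \<or> (u \<in> B \<and> v \<in> A)"
      using assms(2) unfolding bipartite_def by blast
    have "(u \<in> A \<and> v \<in> B) \<or> (u \<in> B \<and> v \<in> A)" "(v \<in> A \<and> w \<in> B) \<or> (v \<in> B \<and> w \<in> A)"
      "(u \<in> A \<and> w \<in> B) \<or> (u \<in> B \<and> w \<in> A)"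
      using AB(2)[rule_format, OF \<open>E u v\<close>] AB(2)[rule_format, OF \<open>E v w\<close>] AB(2)[rule_format, OF \<open>E u w\<close>] by auto
    with AB(1) show False by blast
  qed
  have Esym: "\<And>u v. E u v \<Longrightarrow> E v u" using sg by blast
  have inj: "inj_on f V" using bij bij_betw_imp_inj_on by blast
  have finj: "\<And>u v. u \<in> V \<Longrightarrow> v \<in> V \<Longrightarrow> f u = f v \<Longrightarrow> u = v" using inj by (meson inj_onD)
  have adjE: "\<And>u v. u \<in> V \<Longrightarrow> v \<in> V \<Longrightarrow> wdg_adj W (f u) (f v) \<Longrightarrow> E u v" using iso by simp
  have Eadj: "\<And>u v. E u v \<Longrightarrow> wdg_adj W (f u) (f v)" using iso sg by metis
  define pr where "pr e = (SOME pr. e = {fst pr, snd pr} \<and> E (fst pr) (snd pr))" for e :: "'a set"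
  define \<gamma> where "\<gamma> e = linepath (f (fst (pr e))) (f (snd (pr e)))" for e
  have KE: "arc (\<gamma> {u, v}) \<and> {pathstart (\<gamma> {u, v}), pathfinish (\<gamma> {u, v})} = {f u, f v}
      \<and> path_image (\<gamma> {u, v}) = closed_segment (f u) (f v)" if "E u v" for u v
  proof -
    have "\<exists>pr. {u,v} = {fst pr, snd pr} \<and> E (fst pr) (snd pr)" using that by (intro exI[of _ "(u,v)"]) auto
    hence h: "{u,v} = {fst (pr {u,v}), snd (pr {u,v})} \<and> E (fst (pr {u,v})) (snd (pr {u,v}))"
      unfolding pr_def by (rule someI_ex)
    define u' where "u' = fst (pr {u,v})"
    define v' where "v' = snd (pr {u,v})"
    have h': "{u,v} = {u',v'}" "E u' v'" using h unfolding u'_def v'_def by auto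
    have ne: "f u' \<noteq> f v'" using sg[OF h'(2)] finj by blast
    have g: "\<gamma> {u,v} = linepath (f u') (f v')" unfolding \<gamma>_def u'_def v'_def by simp
    have c: "(u = u' \<and> v = v') \<or> (u = v' \<and> v = u')" using h'(1) by (metis doubleton_eq_iff)
    have cs: "closed_segment (f u') (f v') = closed_segment (f u) (f v)" using c by (metis closed_segment_commute)
    have cp: "{f u', f v'} = {f u, f v}" using c by blast
    show ?thesis unfolding g using ne cs cp by simp
  qed
  have SH: "p = f x" if "E x y" "E x z" "y \<noteq> z" "p \<in> closed_segment (f x) (f y)"
    "p \<in> closed_segment (f x) (f z)" for x y z p
  proof (rule ccontr)
    assume "p \<noteq> f x"
    from L5[OF that(4,5) this] have or: "f y \<in> closed_segment (f x) (f z) \<or> f z \<in> closed_segment (f x) (f y)" .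
    have V: "x \<in> V" "y \<in> V" "z \<in> V" using sg that(1,2) by auto
    have d: "f y \<noteq> f x" "f z \<noteq> f x" "f y \<noteq> f z" using sg that(1,2,3) finj V by metis+
    from or show False
    proof
      assume "f y \<in> closed_segment (f x) (f z)"
      from L3[OF Eadj[OF that(2)] this] d have "wdg_adj W (f z) (f y)" by auto
      hence "E z y" using adjE V by blast
      thus False using TF[of x z y] that(1,2) by blast
    next
      assume "f z \<in> closed_segment (f x) (f y)"
      from L3[OF Eadj[OF that(1)] this] d have "wdg_adj W (f y) (f z)" by auto
      hence "E y z" using adjE V by blast
      thus False using TF[of x y z] that(1,2) by blast
    qed
  qed
  have "planar V E"
    unfolding planar_def
  proof (intro exI[of _ f] exI[of _ \<gamma>] conjI allI impI ballI)
    show "inj_on f V" by (rule inj)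
  next
    fix u v assume "E u v"
    note K = KE[OF this]
    show "arc (\<gamma> {u, v})" using K by blast
    show "{pathstart (\<gamma> {u, v}), pathfinish (\<gamma> {u, v})} = {f u, f v}" using K by blast
    have V: "u \<in> V" "v \<in> V" using sg \<open>E u v\<close> by auto
    have "closed_segment (f u) (f v) \<inter> f ` V \<subseteq> {f u, f v}"
    proof
      fix z assume z: "z \<in> closed_segment (f u) (f v) \<inter> f ` V"
      then obtain w where w: "w \<in> V" "z = f w" by auto
      show "z \<in> {f u, f v}"
      proof (rule ccontr)
        assume "z \<notin> {f u, f v}"
        hence "z \<noteq> f u" "z \<noteq> f v" by auto
        from L3[OF Eadj[OF \<open>E u v\<close>] _ this] z have "wdg_adj W (f u) z \<and> wdg_adj W (f v) z" by auto
        hence "E u w" "E v w" using adjE w V by auto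
        thus False using TF[of u v w] \<open>E u v\<close> by blast
      qed
    qed
    thus "path_image (\<gamma> {u, v}) \<inter> f ` V = {f u, f v}" using K V by auto
  next
    fix e e' assume e: "e \<in> graph_edges V E" and e': "e' \<in> graph_edges V E" and ne: "e \<noteq> e'"
    obtain a b where ab: "e = {a,b}" "E a b" using e unfolding graph_edges_def by blast
    obtain c d where cd: "e' = {c,d}" "E c d" using e' unfolding graph_edges_def by blast
    have Vs: "a \<in> V" "b \<in> V" "c \<in> V" "d \<in> V" "a \<noteq> b" "c \<noteq> d" using sg ab cd by auto
    have pe: "path_image (\<gamma> e) = closed_segment (f a) (f b)" "path_image (\<gamma> e') = closed_segment (f c) (f d)"
      using KE ab cd by auto
    have sub: "closed_segment (f a) (f b) \<inter> closed_segment (f c) (f d) \<subseteq> f ` (e \<inter> e')"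
    proof
      fix p assume p: "p \<in> closed_segment (f a) (f b) \<inter> closed_segment (f c) (f d)"
      show "p \<in> f ` (e \<inter> e')"
      proof (cases "c \<in> {a,b} \<or> d \<in> {a,b}")
        case False
        hence d4: "f c \<noteq> f a" "f c \<noteq> f b" "f d \<noteq> f a" "f d \<noteq> f b" using finj Vs by (metis insertCI)+
        from L4[OF Eadj[OF ab(2)] Eadj[OF cd(2)] d4] p
        have "(wdg_adj W (f a) (f c) \<and> wdg_adj W (f b) (f c)) \<or> (wdg_adj W (f a) (f d) \<and> wdg_adj W (f b) (f d)) \<or>
         (wdg_adj W (f c) (f a) \<and> wdg_adj W (f d) (f a)) \<or> (wdg_adj W (f c) (f b) \<and> wdg_adj W (f d) (f b))"
          by blast
        hence "(E a c \<and> E b c) \<or> (E a d \<and> E b d) \<or> (E c a \<and> E d a) \<or> (E c b \<and> E d b)"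
          using adjE Vs by blast
        hence False using TF[of a c b] TF[of a d b] TF[of c a d] TF[of c b d] ab(2) cd(2) Esym by blast
        thus ?thesis ..
      next
        case True
        have p1: "p \<in> closed_segment (f a) (f b)" "p \<in> closed_segment (f b) (f a)"
          "p \<in> closed_segment (f c) (f d)" "p \<in> closed_segment (f d) (f c)"
          using p closed_segment_commute by auto
        have Eba: "E b a" "E d c" using sg ab cd by auto
        show ?thesis
        proof -
          { assume "c = a" hence "b \<noteq> d" using ne ab cd by auto
            hence "p = f a" using SH[OF ab(2) _ _ p1(1)] cd(2) p1(3) \<open>c = a\<close> by blast
            hence ?thesis using ab cd \<open>c = a\<close> by auto }
          moreover
          { assume "c = b" hence "a \<noteq> d" using ne ab cd by auto
            hence "p = f b" using SH[OF Eba(1) _ _ p1(2)] cd(2) p1(3) \<open>c = b\<close> by blast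
            hence ?thesis using ab cd \<open>c = b\<close> by auto }
          moreover
          { assume "d = a" hence "b \<noteq> c" using ne ab cd by auto
            hence "p = f a" using SH[OF ab(2) _ _ p1(1)] Eba(2) p1(4) \<open>d = a\<close> by blast
            hence ?thesis using ab cd \<open>d = a\<close> by auto }
          moreover
          { assume "d = b" hence "a \<noteq> c" using ne ab cd by auto
            hence "p = f b" using SH[OF Eba(1) _ _ p1(2)] Eba(2) p1(4) \<open>d = b\<close> by blast
            hence ?thesis using ab cd \<open>d = b\<close> by auto }
          ultimately show ?thesis using True by blast
        qed
      qed
    qed
    moreover have "f ` (e \<inter> e') \<subseteq> closed_segment (f a) (f b) \<inter> closed_segment (f c) (f d)"
      using ab cd by auto
    ultimately show "path_image (\<gamma> e) \<inter> path_image (\<gamma> e') = f ` (e \<inter> e')" unfolding pe by blast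
  qed
  thus False using assms(3) by contradiction
qed

end
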